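(* For any $f\in\mathcal{E}$ with $f\neq\mathrm{id}$, the index $[\mathcal{E}:C(f)]$ is uncountable, where $C(f)=\{g\in\mathcal{E}:fg=gf\}$.
   Context: Identify $\mathbb{T}^1=\mathbb{R}/\mathbb{Z}$ with $[0,1)$. An interval exchange transformation is a bijection of $\mathbb{T}^1$ that is a translation on each piece of some partition of $[0,1)$ into finitely many half-open intervals $[a,b)$; $\mathcal{E}$ is the group of these under composition. *)

theory Defs
  imports "HOL-Analysis.Analysis"
begin

text \<open>T^1 = R/Z identified with [0,1). An interval exchange transformation is
represented as a function real => real which is the identity outside [0,1),
is a bijection of [0,1), and is a translation on each piece of a partition
0 = a_0 < a_1 < ... < a_n = 1 of [0,1) into half-open intervals [a_i, a_{i+1}).\<close>

definition is_iet :: "(real \<Rightarrow> real) \<Rightarrow> bool" where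
  "is_iet f \<longleftrightarrow>
     bij_betw f {0..<1} {0..<1} \<and>
     (\<forall>x. x \<notin> {0..<1} \<longrightarrow> f x = x) \<and>
     (\<exists>(n::nat) (a::nat \<Rightarrow> real) (c::nat \<Rightarrow> real).
        n \<ge> 1 \<and> a 0 = 0 \<and> a n = 1 \<and> (\<forall>i<n. a i < a (Suc i)) \<and>
        (\<forall>i<n. \<forall>x\<in>{a i..<a (Suc i)}. f x = x + c i))"

definition IET :: "(real \<Rightarrow> real) set" where
  "IET = {f. is_iet f}"

definition centralizer :: "(real \<Rightarrow> real) \<Rightarrow> (real \<Rightarrow> real) set" where
  "centralizer f = {g \<in> IET. f \<circ> g = g \<circ> f}"

definition left_cosets_IET :: "(real \<Rightarrow> real) set \<Rightarrow> (real \<Rightarrow> real) set set" where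
  "left_cosets_IET H = {(\<lambda>h. g \<circ> h) ` H | g. g \<in> IET}"

end

theory Submission
  imports Defs
begin

definition rot :: "real \<Rightarrow> real \<Rightarrow> real \<Rightarrow> real \<Rightarrow> real" where
  "rot u L t x = (if u \<le> x \<and> x < u + L then (if x + t < u + L then x + t else x + t - L) else x)"

lemma rot_inv:
  assumes "0 < t" "t < L"
  shows "rot u L (L - t) (rot u L t x) = x"
  using assms unfolding rot_def by auto

lemma rot_range:
  assumes "0 < t" "t < L" "0 \<le> u" "u + L \<le> 1" "x \<in> {0..<1}"
  shows "rot u L t x \<in> {0..<1}"
  using assms unfolding rot_def by auto

lemma rot_iet:
  assumes "0 < t" "t < L" "0 \<le> u" "u + L < 1"
  shows "is_iet (rot u L t)"
proof -
  have bij: "bij_betw (rot u L t) {0..<1} {0..<1}"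
    apply (rule bij_betw_byWitness[where f'="rot u L (L - t)"])
    using assms rot_inv[OF assms(1,2)] rot_inv[of "L - t" L u] rot_range[of t L u] rot_range[of "L-t" L u]
    by auto
  have out: "\<forall>x. x \<notin> {0..<1} \<longrightarrow> rot u L t x = x"
    using assms unfolding rot_def by auto
  have part: "\<exists>(n::nat) (a::nat \<Rightarrow> real) (c::nat \<Rightarrow> real).
        n \<ge> 1 \<and> a 0 = 0 \<and> a n = 1 \<and> (\<forall>i<n. a i < a (Suc i)) \<and>
        (\<forall>i<n. \<forall>x\<in>{a i..<a (Suc i)}. rot u L t x = x + c i)"
  proof (cases "u = 0")
    case True
    let ?a = "\<lambda>i. [0, u + L - t, u + L, 1::real] ! i"
    let ?c = "\<lambda>i. [t, t - L, 0::real] ! i"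
    have "\<forall>i<3. ?a i < ?a (Suc i)" using assms True by (auto simp: less_Suc_eq numeral_eq_Suc)
    moreover have "\<forall>i<3. \<forall>x\<in>{?a i..<?a (Suc i)}. rot u L t x = x + ?c i"
      using assms True by (auto simp: less_Suc_eq numeral_eq_Suc rot_def)
    ultimately show ?thesis
      by (intro exI[of _ 3] exI[of _ ?a] exI[of _ ?c]) simp
  next
    case False
    let ?a = "\<lambda>i. [0, u, u + L - t, u + L, 1::real] ! i"
    let ?c = "\<lambda>i. [0, t, t - L, 0::real] ! i"
    have "\<forall>i<4. ?a i < ?a (Suc i)" using assms False by (auto simp: less_Suc_eq numeral_eq_Suc)
    moreover have "\<forall>i<4. \<forall>x\<in>{?a i..<?a (Suc i)}. rot u L t x = x + ?c i"
      using assms False by (auto simp: less_Suc_eq numeral_eq_Suc rot_def)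
    ultimately show ?thesis
      by (intro exI[of _ 4] exI[of _ ?a] exI[of _ ?c]) simp
  qed
  show ?thesis unfolding is_iet_def using bij out part by blast
qed

lemma id_iet: "is_iet id"
proof -
  have "\<exists>(n::nat) (a::nat \<Rightarrow> real) (c::nat \<Rightarrow> real).
        n \<ge> 1 \<and> a 0 = 0 \<and> a n = 1 \<and> (\<forall>i<n. a i < a (Suc i)) \<and>
        (\<forall>i<n. \<forall>x\<in>{a i..<a (Suc i)}. id x = x + c i)"
    by (intro exI[of _ 1] exI[of _ "\<lambda>i. if i = 0 then 0 else 1"] exI[of _ "\<lambda>i. 0"]) auto
  then show ?thesis unfolding is_iet_def by auto
qed

theorem corollary5p9:
  assumes "f \<in> IET" and "f \<noteq> id"
  shows "uncountable (left_cosets_IET (centralizer f))"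
proof
  assume cnt: "countable (left_cosets_IET (centralizer f))"
  have fi: "is_iet f" using assms(1) unfolding IET_def by auto
  obtain p where fp: "f p \<noteq> p" using assms(2) by (auto simp: fun_eq_iff)
  have p01: "p \<in> {0..<1}" using fi fp unfolding is_iet_def by auto
  define u where "u = f p"
  have u01: "u \<in> {0..<1}" using fi p01 unfolding is_iet_def u_def bij_betw_def by auto
  define L where "L = (if p > u then p - u else 1 - u) / 2"
  have L0: "L > 0" and uL: "u + L < 1" and pL: "\<not> (u \<le> p \<and> p < u + L)"
    using u01 p01 fp unfolding L_def u_def by (auto split: if_splits simp: field_simps)
  define K where "K = (\<lambda>t. (\<lambda>h. rot u L t \<circ> h) ` centralizer f)"
  have Kin: "K ` {0<..<L} \<subseteq> left_cosets_IET (centralizer f)"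
  proof
    fix X assume "X \<in> K ` {0<..<L}"
    then obtain t where t: "t \<in> {0<..<L}" "X = K t" by auto
    have "rot u L t \<in> IET" using rot_iet[of t L u] t u01 uL unfolding IET_def by auto
    then show "X \<in> left_cosets_IET (centralizer f)"
      unfolding left_cosets_IET_def K_def t(2) by blast
  qed
  have inj: "inj_on K {0<..<L}"
  proof (rule inj_onI)
    fix s t assume s: "s \<in> {0<..<L}" and t: "t \<in> {0<..<L}" and eq: "K s = K t"
    have "id \<in> centralizer f" using id_iet unfolding centralizer_def IET_def by auto
    then have "rot u L s \<in> K s" unfolding K_def by (metis comp_id image_eqI)
    then have "rot u L s \<in> K t" using eq by simp
    then obtain h where h: "h \<in> centralizer f" "rot u L s = rot u L t \<circ> h"
      unfolding K_def by auto
    have comm: "f (h p) = h (f p)" using h(1) unfolding centralizer_def by (auto simp: fun_eq_iff)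
    have "rot u L s p = p" using pL unfolding rot_def by auto
    then have "rot u L t (h p) = p" using h(2) by (metis comp_apply)
    then have hp: "h p = p" using pL L0 t unfolding rot_def by (auto split: if_splits)
    have "rot u L s u = u + s" using s L0 unfolding rot_def by auto
    moreover have "rot u L s u = rot u L t (h (f p))" using h(2) u_def by (metis comp_apply)
    moreover have "h (f p) = u" using comm hp u_def by simp
    moreover have "rot u L t u = u + t" using t L0 unfolding rot_def by auto
    ultimately show "s = t" by simp
  qed
  have "countable (K ` {0<..<L})" using countable_subset[OF Kin cnt] .
  then have "countable {0<..<L::real}" using countable_image_inj_on inj by blast
  then show False using uncountable_open_interval L0 by blast
qed

end
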